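(* Let $0<\epsilon<1$ and $0<\delta<1$. There exists a verification operator $\Omega$ for $|\Psi\rangle$ with $F(1,\delta,\Omega)\ge1-\epsilon$ (i.e. the target state can be verified within infidelity $\epsilon$ and significance level $\delta$ in the adversarial scenario using a single test, with no restriction on the accessible measurements) iff $$\delta(1-\epsilon)\le\max\{2-2\sqrt{1-\delta}-\delta,\;2\delta-1\},$$ or equivalently iff $$\delta\ge\min\Big\{\frac{4(1-\epsilon)}{(2-\epsilon)^2},\frac{1}{1+\epsilon}\Big\}=\begin{cases}\frac{1}{1+\epsilon},&0<\epsilon\le\frac45,\\ \frac{4(1-\epsilon)}{(2-\epsilon)^2},&\frac45\le\epsilon<1.\end{cases}$$
   Context: Let $\mathcal H$ be a Hilbert space of finite dimension $D\ge2$ and $|\Psi\rangle\in\mathcal H$ a unit vector. A verification operator for $|\Psi\rangle$ is a Hermitian operator $\Omega$ on $\mathcal H$ with $0\le\Omega\le1$, $\Omega|\Psi\rangle=|\Psi\rangle$, whose eigenvalue $1$ is nondegenerate. For $N=1$ and a density operator $\rho$ on $\mathcal H^{\otimes2}$ put $p_\rho=\mathrm{tr}[(\Omega\otimes1)\rho]$, $f_\rho=\mathrm{tr}[(\Omega\otimes|\Psi\rangle\langle\Psi|)\rho]$, and $F(1,\delta,\Omega)=\min\{f_\rho/p_\rho:p_\rho\ge\delta\}$, the minimum over permutation-invariant density operators on $\mathcal H^{\otimes2}$. *)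

theory Defs
  imports Complex_Main "Jordan_Normal_Form.Matrix"
begin

text \<open>The Hilbert space H is C^D, vectors are complex vec of dimension D,
operators on H are D x D complex matrices, operators on H (x) H are
(D*D) x (D*D) complex matrices with the standard Kronecker index convention.\<close>

definition mtrace :: "complex mat \<Rightarrow> complex" where
  "mtrace A = (\<Sum>i<dim_row A. A $$ (i, i))"

definition adj :: "complex mat \<Rightarrow> complex mat" where
  "adj A = mat (dim_col A) (dim_row A) (\<lambda>(i, j). cnj (A $$ (j, i)))"

definition cinner :: "complex vec \<Rightarrow> complex vec \<Rightarrow> complex" where
  "cinner v w = (\<Sum>i<dim_vec v. cnj (v $ i) * w $ i)"

definition hermitian :: "nat \<Rightarrow> complex mat \<Rightarrow> bool" where
  "hermitian n A \<longleftrightarrow> A \<in> carrier_mat n n \<and> adj A = A"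

definition psd :: "nat \<Rightarrow> complex mat \<Rightarrow> bool" where
  "psd n A \<longleftrightarrow> hermitian n A \<and> (\<forall>v \<in> carrier_vec n. 0 \<le> Re (cinner v (A *\<^sub>v v)))"

definition unit_vec :: "nat \<Rightarrow> complex vec \<Rightarrow> bool" where
  "unit_vec n \<psi> \<longleftrightarrow> \<psi> \<in> carrier_vec n \<and> cinner \<psi> \<psi> = 1"

definition proj :: "complex vec \<Rightarrow> complex mat" where
  "proj \<psi> = mat (dim_vec \<psi>) (dim_vec \<psi>) (\<lambda>(i, j). \<psi> $ i * cnj (\<psi> $ j))"

definition kron :: "complex mat \<Rightarrow> complex mat \<Rightarrow> complex mat" where
  "kron A B = mat (dim_row A * dim_row B) (dim_col A * dim_col B)
     (\<lambda>(i, j). A $$ (i div dim_row B, j div dim_col B) * B $$ (i mod dim_row B, j mod dim_col B))"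

definition swap_op :: "nat \<Rightarrow> complex mat" where
  "swap_op D = mat (D * D) (D * D) (\<lambda>(i, j). if j = (i mod D) * D + i div D then 1 else 0)"

definition verification_operator :: "nat \<Rightarrow> complex vec \<Rightarrow> complex mat \<Rightarrow> bool" where
  "verification_operator D \<psi> \<Omega> \<longleftrightarrow>
     hermitian D \<Omega> \<and> psd D \<Omega> \<and> psd D (1\<^sub>m D - \<Omega>) \<and> \<Omega> *\<^sub>v \<psi> = \<psi> \<and>
     (\<forall>v \<in> carrier_vec D. \<Omega> *\<^sub>v v = v \<longrightarrow> (\<exists>c. v = c \<cdot>\<^sub>v \<psi>))"

definition density_op :: "nat \<Rightarrow> complex mat \<Rightarrow> bool" where
  "density_op n \<rho> \<longleftrightarrow> psd n \<rho> \<and> mtrace \<rho> = 1"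

definition perm_invariant :: "nat \<Rightarrow> complex mat \<Rightarrow> bool" where
  "perm_invariant D \<rho> \<longleftrightarrow> swap_op D * \<rho> * swap_op D = \<rho>"

definition p_rho :: "nat \<Rightarrow> complex mat \<Rightarrow> complex mat \<Rightarrow> real" where
  "p_rho D \<Omega> \<rho> = Re (mtrace (kron \<Omega> (1\<^sub>m D) * \<rho>))"

definition f_rho :: "nat \<Rightarrow> complex vec \<Rightarrow> complex mat \<Rightarrow> complex mat \<Rightarrow> real" where
  "f_rho D \<psi> \<Omega> \<rho> = Re (mtrace (kron \<Omega> (proj \<psi>) * \<rho>))"

definition F1 :: "nat \<Rightarrow> complex vec \<Rightarrow> real \<Rightarrow> complex mat \<Rightarrow> real" where
  "F1 D \<psi> \<delta> \<Omega> = Inf {f_rho D \<psi> \<Omega> \<rho> / p_rho D \<Omega> \<rho> | \<rho>.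
      \<rho> \<in> carrier_mat (D * D) (D * D) \<and> density_op (D * D) \<rho> \<and> perm_invariant D \<rho> \<and>
      p_rho D \<Omega> \<rho> \<ge> \<delta>}"

end

theory Submission
  imports Defs
begin
lemma sum_pair: fixes m n :: nat shows "(\<Sum>i<m*n. f i) = (\<Sum>a<m. \<Sum>b<n. f (a*n+b))"
proof (induction m)
  case 0 then show ?case by simp
next
  case (Suc m)
  have e: "{..<Suc m * n} = {..<m*n} \<union> (\<lambda>b. m*n+b) ` {..<n}"
  proof
    show "{..<Suc m * n} \<subseteq> {..<m*n} \<union> (\<lambda>b. m*n+b) ` {..<n}"
    proof
      fix x assume "x \<in> {..<Suc m * n}"
      then have "x < m*n \<or> (x - m*n < n \<and> x = m*n + (x - m*n))" by auto
      then show "x \<in> {..<m*n} \<union> (\<lambda>b. m*n+b) ` {..<n}" by blast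
    qed
  qed auto
  have "(\<Sum>i\<in>(\<lambda>b. m*n+b) ` {..<n}. f i) = (\<Sum>b<n. f (m*n+b))"
    by (subst sum.reindex) (auto simp: inj_on_def)
  then show ?case using Suc unfolding e
    by (subst sum.union_disjoint) auto
qed

lemma divmod_aux: fixes a b D :: nat assumes "b < D" shows "(a*D+b) div D = a" "(a*D+b) mod D = b"
  using assms by auto

definition tt :: "nat \<Rightarrow> complex mat \<Rightarrow> complex mat \<Rightarrow> complex mat \<Rightarrow> complex" where
 "tt D A B \<rho> = (\<Sum>i<D*D. \<Sum>j<D*D. A$$(i div D, j div D) * B$$(i mod D, j mod D) * \<rho>$$(j,i))"

lemma divD_less: fixes i D :: nat shows "i < D*D \<Longrightarrow> i div D < D"
  by (simp add: less_mult_imp_div_less)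
lemma modD_less: fixes i D :: nat shows "i < D*D \<Longrightarrow> i mod D < D"
  by (metis mod_less_divisor mult_0_right nat_neq_iff not_less0)

lemma mtrace_kron:
  assumes "A \<in> carrier_mat D D" "B \<in> carrier_mat D D" "\<rho> \<in> carrier_mat (D*D) (D*D)"
  shows "mtrace (kron A B * \<rho>) = tt D A B \<rho>"
proof -
  have "(kron A B * \<rho>) $$ (i,i) = (\<Sum>j<D*D. A$$(i div D, j div D) * B$$(i mod D, j mod D) * \<rho>$$(j,i))"
    if "i<D*D" for i
    using that assms by (auto simp: kron_def scalar_prod_def atLeast0LessThan intro!: sum.cong)
  then show ?thesis using assms unfolding mtrace_def tt_def by (auto simp: kron_def intro!: sum.cong)
qed

lemma tt4: "tt D A B \<rho> = (\<Sum>a1<D. \<Sum>a2<D. \<Sum>b1<D. \<Sum>b2<D.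
    A$$(a1,b1) * B$$(a2,b2) * \<rho>$$(b1*D+b2, a1*D+a2))"
  unfolding tt_def sum_pair by (auto simp: divmod_aux intro!: sum.cong)

lemma tt_lin1:
  assumes "\<And>r s. r<D \<Longrightarrow> s<D \<Longrightarrow> A$$(r,s) = x*A1$$(r,s) + y*A2$$(r,s)"
  shows "tt D A B \<rho> = x*tt D A1 B \<rho> + y*tt D A2 B \<rho>"
  unfolding tt4 using assms
  by (simp add: sum_distrib_left sum.distrib algebra_simps)

lemma tt_lin2:
  assumes "\<And>r s. r<D \<Longrightarrow> s<D \<Longrightarrow> B$$(r,s) = x*B1$$(r,s) + y*B2$$(r,s)"
  shows "tt D A B \<rho> = x*tt D A B1 \<rho> + y*tt D A B2 \<rho>"
  unfolding tt4 using assms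
  by (simp add: sum_distrib_left sum.distrib algebra_simps)

lemma sum_delta_mult: fixes g :: "nat \<Rightarrow> 'a::semiring_1"
  assumes "a \<in> S" "finite S" shows "(\<Sum>l\<in>S. (if l = a then 1 else 0) * g l) = g a"
  "(\<Sum>l\<in>S. g l * (if l = a then 1 else 0)) = g a"
proof -
  have "(\<Sum>l\<in>S. (if l = a then 1 else 0) * g l) = (\<Sum>l\<in>S. if l = a then g l else 0)"
    by (rule sum.cong) auto
  then show "(\<Sum>l\<in>S. (if l = a then 1 else 0) * g l) = g a" using assms by (simp add: sum.delta)
  have "(\<Sum>l\<in>S. g l * (if l = a then 1 else 0)) = (\<Sum>l\<in>S. if l = a then g l else 0)"
    by (rule sum.cong) auto
  then show "(\<Sum>l\<in>S. g l * (if l = a then 1 else 0)) = g a" using assms by (simp add: sum.delta)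
qed

definition sig :: "nat \<Rightarrow> nat \<Rightarrow> nat" where "sig D i = (i mod D)*D + i div D"

lemma sig_less: "i < D*D \<Longrightarrow> sig D i < D*D"
proof -
  assume i: "i < D*D"
  have "i mod D < D" "i div D < D" using i divD_less modD_less by auto
  then have "i mod D \<le> D - 1" by linarith
  then have "(i mod D)*D + i div D \<le> (D-1)*D + i div D" by simp
  also have "\<dots> < D*D" using \<open>i div D < D\<close> by (cases D) auto
  finally show ?thesis unfolding sig_def .
qed

lemma sig_sig: "i < D*D \<Longrightarrow> sig D (sig D i) = i"
  unfolding sig_def using divD_less[of i D] modD_less[of i D] divmod_aux
  by (metis div_mult_mod_eq)

lemma sig_pair: "b < D \<Longrightarrow> a < D \<Longrightarrow> sig D (a*D+b) = b*D+a"
  unfolding sig_def by (simp add: divmod_aux)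

lemma swap_entries:
  assumes "\<rho> \<in> carrier_mat (D*D) (D*D)" "i < D*D" "j < D*D"
  shows "(swap_op D * \<rho> * swap_op D) $$ (i,j) = \<rho> $$ (sig D i, sig D j)"
proof -
  have S: "swap_op D $$ (k,l) = (if l = sig D k then 1 else 0)" if "k<D*D" "l<D*D" for k l
    using that unfolding swap_op_def sig_def by simp
  have 1: "(swap_op D * \<rho>) $$ (i,k) = \<rho> $$ (sig D i, k)" if "k < D*D" for k
  proof -
    have "(swap_op D * \<rho>) $$ (i,k) = (\<Sum>l<D*D. (if l = sig D i then 1 else 0) * \<rho> $$ (l,k))"
      using assms that S by (auto simp: scalar_prod_def atLeast0LessThan swap_op_def intro!: sum.cong)
    also have "\<dots> = \<rho> $$ (sig D i, k)" using sig_less[OF assms(2)]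
      by (simp add: sum_delta_mult)
    finally show ?thesis .
  qed
  have "(swap_op D * \<rho> * swap_op D) $$ (i,j) = (\<Sum>k<D*D. \<rho> $$ (sig D i, k) * (if j = sig D k then 1 else 0))"
    using assms S 1 by (auto simp: scalar_prod_def atLeast0LessThan swap_op_def intro!: sum.cong)
  also have "\<dots> = (\<Sum>k<D*D. \<rho> $$ (sig D i, k) * (if k = sig D j then 1 else 0))"
  proof (intro sum.cong refl)
    fix k assume "k \<in> {..<D*D}"
    then have "j = sig D k \<longleftrightarrow> k = sig D j" using sig_sig sig_less assms(3) by auto
    then show "\<rho> $$ (sig D i, k) * (if j = sig D k then 1 else 0) = \<rho> $$ (sig D i, k) * (if k = sig D j then 1 else 0)" by simp
  qed
  also have "\<dots> = \<rho> $$ (sig D i, sig D j)" using sig_less[OF assms(3)]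
    by (simp add: sum_delta_mult)
  finally show ?thesis .
qed

lemma sum4_swap: "(\<Sum>a1\<in>A. \<Sum>a2\<in>A. \<Sum>b1\<in>B. \<Sum>b2\<in>B. g a1 a2 b1 b2) =
   (\<Sum>a2\<in>A. \<Sum>a1\<in>A. \<Sum>b2\<in>B. \<Sum>b1\<in>B. g a1 a2 b1 b2)"
  by (subst sum.swap) (rule sum.cong[OF refl], rule sum.cong[OF refl], rule sum.swap)

lemma tt_swap:
  assumes "\<rho> \<in> carrier_mat (D*D) (D*D)" "perm_invariant D \<rho>"
  shows "tt D A B \<rho> = tt D B A \<rho>"
proof -
  have r: "\<rho> $$ (b1*D+b2, a1*D+a2) = \<rho> $$ (b2*D+b1, a2*D+a1)"
    if "a1<D" "a2<D" "b1<D" "b2<D" for a1 a2 b1 b2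
  proof -
    have l1: "b1*D+b2 < D*D" "a1*D+a2 < D*D" using that
      by (metis div_less_iff_less_mult divmod_aux(1) not_less0 zero_less_iff_neq_zero)+
    have "\<rho> $$ (b1*D+b2, a1*D+a2) = (swap_op D * \<rho> * swap_op D) $$ (b1*D+b2, a1*D+a2)"
      using assms(2) unfolding perm_invariant_def by simp
    also have "\<dots> = \<rho> $$ (b2*D+b1, a2*D+a1)"
      using swap_entries[OF assms(1) l1] sig_pair that by simp
    finally show ?thesis .
  qed
  have "tt D A B \<rho> = (\<Sum>a1<D. \<Sum>a2<D. \<Sum>b1<D. \<Sum>b2<D.
    A$$(a1,b1) * B$$(a2,b2) * \<rho>$$(b2*D+b1, a2*D+a1))"
    unfolding tt4 using r by (auto intro!: sum.cong)
  also have "\<dots> = (\<Sum>a2<D. \<Sum>a1<D. \<Sum>b2<D. \<Sum>b1<D.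
    B$$(a2,b2) * A$$(a1,b1) * \<rho>$$(b2*D+b1, a2*D+a1))"
    by (subst sum4_swap) (simp add: mult.commute)
  also have "\<dots> = tt D B A \<rho>" unfolding tt4 ..
  finally show ?thesis .
qed

lemma cinner_quad:
  assumes "\<rho> \<in> carrier_mat n n" "w \<in> carrier_vec n"
  shows "cinner w (\<rho> *\<^sub>v w) = (\<Sum>i<n. \<Sum>j<n. w$i * cnj(w$j) * \<rho>$$(j,i))"
proof -
  have "cinner w (\<rho> *\<^sub>v w) = (\<Sum>j<n. \<Sum>i<n. cnj (w$j) * (\<rho>$$(j,i) * w$i))"
    using assms unfolding cinner_def
    by (auto simp: scalar_prod_def atLeast0LessThan sum_distrib_left intro!: sum.cong)
  also have "\<dots> = (\<Sum>i<n. \<Sum>j<n. w$i * cnj(w$j) * \<rho>$$(j,i))"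
    by (subst sum.swap) (simp add: ac_simps)
  finally show ?thesis .
qed

lemma psd_quad:
  assumes "psd n \<rho>" "w \<in> carrier_vec n"
  shows "0 \<le> Re (\<Sum>i<n. \<Sum>j<n. w$i * cnj(w$j) * \<rho>$$(j,i))"
  using assms cinner_quad[of \<rho> n w] unfolding psd_def hermitian_def by auto

definition gram :: "nat \<Rightarrow> complex mat \<Rightarrow> bool" where
  "gram D X \<longleftrightarrow> (\<forall>r<D. \<forall>s<D. X$$(r,s) = (\<Sum>k<D. X$$(r,k) * cnj (X$$(s,k))))"

lemma sum4_swap2: "(\<Sum>i\<in>A. \<Sum>j\<in>A. \<Sum>k\<in>B. \<Sum>l\<in>B. g i j k l) = (\<Sum>k\<in>B. \<Sum>l\<in>B. \<Sum>i\<in>A. \<Sum>j\<in>A. g i j k l)"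
proof -
  have "(\<Sum>i\<in>A. \<Sum>j\<in>A. \<Sum>k\<in>B. \<Sum>l\<in>B. g i j k l) = (\<Sum>i\<in>A. \<Sum>k\<in>B. \<Sum>j\<in>A. \<Sum>l\<in>B. g i j k l)"
    by (rule sum.cong[OF refl], rule sum.swap)
  also have "\<dots> = (\<Sum>i\<in>A. \<Sum>k\<in>B. \<Sum>l\<in>B. \<Sum>j\<in>A. g i j k l)"
    by (rule sum.cong[OF refl], rule sum.cong[OF refl], rule sum.swap)
  also have "\<dots> = (\<Sum>k\<in>B. \<Sum>i\<in>A. \<Sum>l\<in>B. \<Sum>j\<in>A. g i j k l)"
    by (rule sum.swap)
  also have "\<dots> = (\<Sum>k\<in>B. \<Sum>l\<in>B. \<Sum>i\<in>A. \<Sum>j\<in>A. g i j k l)"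
    by (rule sum.cong[OF refl], rule sum.swap)
  finally show ?thesis .
qed

lemma tt_gram_nonneg:
  assumes "gram D X" "gram D Y" "psd (D*D) \<rho>"
  shows "0 \<le> Re (tt D X Y \<rho>)"
proof -
  define w where "w k l = vec (D*D) (\<lambda>i. X$$(i div D,k) * Y$$(i mod D,l))" for k l
  have e: "X$$(i div D, j div D) * Y$$(i mod D, j mod D) =
      (\<Sum>k<D. \<Sum>l<D. w k l $ i * cnj (w k l $ j))" if "i<D*D" "j<D*D" for i j
  proof -
    have "X$$(i div D, j div D) * Y$$(i mod D, j mod D) =
      (\<Sum>k<D. X$$(i div D,k) * cnj (X$$(j div D,k))) * (\<Sum>l<D. Y$$(i mod D,l) * cnj (Y$$(j mod D,l)))"
    proof -
      have "X$$(i div D, j div D) = (\<Sum>k<D. X$$(i div D,k) * cnj (X$$(j div D,k)))"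
        using assms(1) divD_less[OF that(1)] divD_less[OF that(2)] unfolding gram_def by blast
      moreover have "Y$$(i mod D, j mod D) = (\<Sum>l<D. Y$$(i mod D,l) * cnj (Y$$(j mod D,l)))"
        using assms(2) modD_less[OF that(1)] modD_less[OF that(2)] unfolding gram_def by blast
      ultimately show ?thesis by simp
    qed
    also have "\<dots> = (\<Sum>k<D. \<Sum>l<D. w k l $ i * cnj (w k l $ j))"
      using that unfolding w_def sum_product by (intro sum.cong refl) (simp add: mult_ac)
    finally show ?thesis .
  qed
  have "tt D X Y \<rho> = (\<Sum>i<D*D. \<Sum>j<D*D. \<Sum>k<D. \<Sum>l<D. w k l $ i * cnj (w k l $ j) * \<rho>$$(j,i))"
    unfolding tt_def using e by (simp add: sum_distrib_right)
  also have "\<dots> = (\<Sum>k<D. \<Sum>l<D. \<Sum>i<D*D. \<Sum>j<D*D. w k l $ i * cnj (w k l $ j) * \<rho>$$(j,i))"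
    by (rule sum4_swap2)
  finally have t: "Re (tt D X Y \<rho>) = (\<Sum>k<D. \<Sum>l<D. Re (\<Sum>i<D*D. \<Sum>j<D*D. w k l $ i * cnj (w k l $ j) * \<rho>$$(j,i)))"
    by simp
  show ?thesis unfolding t
    by (intro sum_nonneg psd_quad[OF assms(3)]) (simp add: w_def)
qed

definition Omg :: "nat \<Rightarrow> complex vec \<Rightarrow> real \<Rightarrow> complex mat" where
  "Omg D \<psi> l = mat D D (\<lambda>(i,j). complex_of_real (1-l) * (\<psi>$i * cnj (\<psi>$j)) + (if i = j then complex_of_real l else 0))"

lemma Omg_carrier[simp]: "Omg D \<psi> l \<in> carrier_mat D D" unfolding Omg_def by simp

lemma cinner_self: "cinner v v = complex_of_real (\<Sum>i<dim_vec v. (cmod (v$i))^2)"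
  unfolding cinner_def of_real_sum by (intro sum.cong refl) (metis complex_norm_square mult.commute of_real_power)

lemma cinner_self_nonneg: "0 \<le> Re (cinner v v)" "Im (cinner v v) = 0"
  unfolding cinner_self by (auto intro: sum_nonneg)

lemma cinner_swap: "dim_vec v = dim_vec w \<Longrightarrow> cinner v w = cnj (cinner w v)"
  unfolding cinner_def by (simp add: mult.commute)

lemma Omg_mult:
  assumes "v \<in> carrier_vec D" "\<psi> \<in> carrier_vec D"
  shows "Omg D \<psi> l *\<^sub>v v = vec D (\<lambda>i. complex_of_real (1-l) * cinner \<psi> v * \<psi>$i + complex_of_real l * v$i)"
proof (rule eq_vecI)
  fix i assume "i < dim_vec (vec D (\<lambda>i. complex_of_real (1-l) * cinner \<psi> v * \<psi>$i + complex_of_real l * v$i))"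
  then have i: "i < D" by simp
  have "(Omg D \<psi> l *\<^sub>v v) $ i = (\<Sum>j<D. (complex_of_real (1-l) * (\<psi>$i * cnj (\<psi>$j)) + (if i = j then complex_of_real l else 0)) * v$j)"
    using i assms by (auto simp: Omg_def scalar_prod_def atLeast0LessThan intro!: sum.cong)
  also have "\<dots> = (\<Sum>j<D. complex_of_real (1-l) * \<psi>$i * (cnj (\<psi>$j) * v$j) + (if i = j then complex_of_real l * v$j else 0))"
    by (intro sum.cong refl) (auto simp: algebra_simps)
  also have "\<dots> = (\<Sum>j<D. complex_of_real (1-l) * \<psi>$i * (cnj (\<psi>$j) * v$j)) + (\<Sum>j<D. (if i = j then complex_of_real l * v$j else 0))"
    by (rule sum.distrib)
  also have "\<dots> = complex_of_real (1-l) * cinner \<psi> v * \<psi>$i + complex_of_real l * v$i"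
  proof -
    have "(\<Sum>j<D. complex_of_real (1-l) * \<psi>$i * (cnj (\<psi>$j) * v$j)) = complex_of_real (1-l) * \<psi>$i * cinner \<psi> v"
      using assms by (simp add: cinner_def sum_distrib_left)
    moreover have "(\<Sum>j<D. (if i = j then complex_of_real l * v$j else 0)) = complex_of_real l * v$i"
      using i by simp
    ultimately show ?thesis by (simp add: mult_ac)
  qed
  finally show "(Omg D \<psi> l *\<^sub>v v) $ i = vec D (\<lambda>i. complex_of_real (1-l) * cinner \<psi> v * \<psi>$i + complex_of_real l * v$i) $ i"
    using i by simp
qed (simp add: Omg_def)

lemma cinner_vec_lin:
  assumes "v \<in> carrier_vec D" "\<psi> \<in> carrier_vec D"
  shows "cinner v (vec D (\<lambda>i. a * \<psi>$i + b * v$i)) = a * cinner v \<psi> + b * cinner v v"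
  using assms unfolding cinner_def by (simp add: sum.distrib sum_distrib_left algebra_simps)

lemma cauchy_unit:
  assumes "unit_vec D \<psi>" "v \<in> carrier_vec D"
  shows "(cmod (cinner \<psi> v))^2 \<le> Re (cinner v v)"
proof -
  define z where "z = cinner \<psi> v"
  define w where "w = vec D (\<lambda>i. v$i - z * \<psi>$i)"
  have d: "dim_vec \<psi> = D" "dim_vec v = D" using assms unfolding unit_vec_def by auto
  have pp: "cinner \<psi> \<psi> = 1" using assms unfolding unit_vec_def by auto
  have vp: "cinner v \<psi> = cnj z" unfolding z_def by (rule cinner_swap) (simp add: d)
  have "cinner w w = (\<Sum>i<D. cnj (v$i) * v$i) - cnj z * (\<Sum>i<D. cnj (\<psi>$i) * v$i)
      - z * (\<Sum>i<D. cnj (v$i) * \<psi>$i) + cnj z * z * (\<Sum>i<D. cnj (\<psi>$i) * \<psi>$i)"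
    unfolding w_def cinner_def by (simp add: sum_distrib_left sum_subtractf[symmetric] sum.distrib[symmetric] algebra_simps)
  also have "\<dots> = cinner v v - cnj z * z"
    using pp vp d unfolding cinner_def z_def by simp
  finally have "cinner v v = cinner w w + cnj z * z" by simp
  then have "Re (cinner v v) = Re (cinner w w) + (cmod z)^2"
    by (simp add: complex_mult_cnj cmod_def power2_eq_square mult.commute)
  then show ?thesis using cinner_self_nonneg[of w] unfolding z_def by simp
qed

lemma cinner_minus: assumes "v \<in> carrier_vec n" "w \<in> carrier_vec n"
  shows "cinner v (v - w) = cinner v v - cinner v w"
  using assms unfolding cinner_def sum_subtractf[symmetric]
  by (intro sum.cong refl) (auto simp: algebra_simps)

lemma Omg_verif:
  assumes "unit_vec D \<psi>" "0 \<le> l" "l < 1"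
  shows "verification_operator D \<psi> (Omg D \<psi> l)"
proof -
  have d: "\<psi> \<in> carrier_vec D" "dim_vec \<psi> = D" using assms unfolding unit_vec_def by auto
  have pp: "cinner \<psi> \<psi> = 1" using assms unfolding unit_vec_def by auto
  have herm: "hermitian D (Omg D \<psi> l)"
    unfolding hermitian_def adj_def by (auto simp: Omg_def)
  have I: "1\<^sub>m D - Omg D \<psi> l = mat D D (\<lambda>(i,j). complex_of_real (l-1) * (\<psi>$i * cnj (\<psi>$j)) + (if i = j then complex_of_real (1-l) else 0))"
    by (rule eq_matI) (auto simp: Omg_def algebra_simps)
  have herm2: "hermitian D (1\<^sub>m D - Omg D \<psi> l)"
    unfolding I hermitian_def adj_def by auto
  have q: "cinner v (Omg D \<psi> l *\<^sub>v v) = complex_of_real (1-l) * (cinner \<psi> v * cnj (cinner \<psi> v)) + complex_of_real l * cinner v v"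
    if v: "v \<in> carrier_vec D" for v
  proof -
    have "cinner v (Omg D \<psi> l *\<^sub>v v) = complex_of_real (1-l) * cinner \<psi> v * cinner v \<psi> + complex_of_real l * cinner v v"
      using Omg_mult[OF v d(1)] cinner_vec_lin[OF v d(1)] by simp
    moreover have "cinner v \<psi> = cnj (cinner \<psi> v)" using v d by (intro cinner_swap) auto
    ultimately show ?thesis by (simp add: mult.assoc)
  qed
  have nn: "0 \<le> Re (cinner v (Omg D \<psi> l *\<^sub>v v))" if v: "v \<in> carrier_vec D" for v
    using q[OF v] assms cinner_self_nonneg[of v]
    by (simp add: complex_mult_cnj)
  have nn2: "0 \<le> Re (cinner v ((1\<^sub>m D - Omg D \<psi> l) *\<^sub>v v))" if v: "v \<in> carrier_vec D" for v
  proof -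
    have "(1\<^sub>m D - Omg D \<psi> l) *\<^sub>v v = v - Omg D \<psi> l *\<^sub>v v"
      using v by (simp add: minus_mult_distrib_mat_vec[OF one_carrier_mat Omg_carrier v])
    then have "cinner v ((1\<^sub>m D - Omg D \<psi> l) *\<^sub>v v) = cinner v v - cinner v (Omg D \<psi> l *\<^sub>v v)"
      using v cinner_minus[OF v mult_mat_vec_carrier[OF Omg_carrier v]] by simp
    also have "\<dots> = complex_of_real (1-l) * (cinner v v - complex_of_real ((cmod (cinner \<psi> v))^2))"
      unfolding q[OF v] complex_norm_square by (simp add: algebra_simps)
    finally have "Re (cinner v ((1\<^sub>m D - Omg D \<psi> l) *\<^sub>v v)) = (1-l) * (Re (cinner v v) - (cmod (cinner \<psi> v))^2)"
      by simp
    then show ?thesis using cauchy_unit[OF assms(1) v] assms by simp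
  qed
  have fix1: "Omg D \<psi> l *\<^sub>v \<psi> = \<psi>"
    using d pp by (auto simp: Omg_mult algebra_simps)
  have eig: "\<exists>c. v = c \<cdot>\<^sub>v \<psi>" if v: "v \<in> carrier_vec D" "Omg D \<psi> l *\<^sub>v v = v" for v
  proof -
    have "v = cinner \<psi> v \<cdot>\<^sub>v \<psi>"
    proof (rule eq_vecI)
      fix i assume "i < dim_vec (cinner \<psi> v \<cdot>\<^sub>v \<psi>)"
      then have i: "i < D" using d by simp
      have "(Omg D \<psi> l *\<^sub>v v) $ i = v $ i" using v by simp
      then have "complex_of_real (1-l) * cinner \<psi> v * \<psi>$i + complex_of_real l * v$i = v$i"
        using Omg_mult[OF v(1) d(1)] i by simp
      then have "complex_of_real (1-l) * (cinner \<psi> v * \<psi>$i - v$i) = 0"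
        by (simp add: algebra_simps)
      moreover have "complex_of_real (1-l) \<noteq> 0" using assms by simp
      ultimately show "v $ i = (cinner \<psi> v \<cdot>\<^sub>v \<psi>) $ i" using i d by simp
    qed (use v d in simp)
    then show ?thesis by blast
  qed
  show ?thesis unfolding verification_operator_def psd_def
    using herm herm2 nn nn2 fix1 eig by blast
qed

lemma proj_carrier[simp]: "\<psi> \<in> carrier_vec D \<Longrightarrow> proj \<psi> \<in> carrier_mat D D"
  unfolding proj_def by auto

lemma gram_P:
  assumes "unit_vec D \<psi>" shows "gram D (proj \<psi>)"
proof -
  have d: "dim_vec \<psi> = D" and pp: "(\<Sum>k<D. cnj (\<psi>$k) * \<psi>$k) = 1"
    using assms unfolding unit_vec_def cinner_def by auto
  show ?thesis unfolding gram_def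
  proof (intro allI impI)
    fix r s assume rs: "r < D" "s < D"
    have "(\<Sum>k<D. proj \<psi> $$ (r,k) * cnj (proj \<psi> $$ (s,k))) = (\<Sum>k<D. \<psi>$r * cnj (\<psi>$s) * (cnj (\<psi>$k) * \<psi>$k))"
      using rs d by (intro sum.cong refl) (auto simp: proj_def mult_ac)
    also have "\<dots> = \<psi>$r * cnj (\<psi>$s)" by (simp add: sum_distrib_left[symmetric] pp)
    finally show "proj \<psi> $$ (r,s) = (\<Sum>k<D. proj \<psi> $$ (r,k) * cnj (proj \<psi> $$ (s,k)))"
      using rs d by (simp add: proj_def)
  qed
qed

lemma gram_Q:
  assumes "unit_vec D \<psi>" shows "gram D (1\<^sub>m D - proj \<psi>)"
proof -
  have d: "dim_vec \<psi> = D" and pp: "(\<Sum>k<D. cnj (\<psi>$k) * \<psi>$k) = 1"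
    using assms unfolding unit_vec_def cinner_def by auto
  show ?thesis unfolding gram_def
  proof (intro allI impI)
    fix r s assume rs: "r < D" "s < D"
    have "(\<Sum>k<D. (1\<^sub>m D - proj \<psi>) $$ (r,k) * cnj ((1\<^sub>m D - proj \<psi>) $$ (s,k))) =
      (\<Sum>k<D. (if k = r then (if k = s then 1 else 0) else 0) - (if k = r then cnj (\<psi>$s) * \<psi>$k else 0)
         - (if k = s then \<psi>$r * cnj (\<psi>$k) else 0) + \<psi>$r * cnj (\<psi>$s) * (cnj (\<psi>$k) * \<psi>$k))"
      using rs d by (intro sum.cong refl) (auto simp: proj_def algebra_simps)
    also have "\<dots> = (\<Sum>k<D. (if k = r then (if k = s then 1 else 0) else 0)) - (\<Sum>k<D. (if k = r then cnj (\<psi>$s) * \<psi>$k else 0))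
         - (\<Sum>k<D. (if k = s then \<psi>$r * cnj (\<psi>$k) else 0)) + (\<Sum>k<D. \<psi>$r * cnj (\<psi>$s) * (cnj (\<psi>$k) * \<psi>$k))"
      by (simp add: sum.distrib sum_subtractf)
    also have "\<dots> = (if r = s then 1 else 0) - \<psi>$r * cnj (\<psi>$s)"
      using rs by (simp add: sum_distrib_left[symmetric] pp)
    finally show "(1\<^sub>m D - proj \<psi>) $$ (r,s) = (\<Sum>k<D. (1\<^sub>m D - proj \<psi>) $$ (r,k) * cnj ((1\<^sub>m D - proj \<psi>) $$ (s,k)))"
      using rs d by (simp add: proj_def)
  qed
qed

lemma sum_delta_mult2: fixes g :: "nat \<Rightarrow> 'a::semiring_1"
  assumes "a \<in> S" "finite S" shows "(\<Sum>l\<in>S. (if a = l then 1 else 0) * g l) = g a"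
proof -
  have "(\<Sum>l\<in>S. (if a = l then 1 else 0) * g l) = (\<Sum>l\<in>S. if l = a then g l else 0)"
    by (rule sum.cong) auto
  then show ?thesis using assms by (simp add: sum.delta)
qed

lemma tt_one_one:
  assumes "\<rho> \<in> carrier_mat (D*D) (D*D)"
  shows "tt D (1\<^sub>m D) (1\<^sub>m D) \<rho> = mtrace \<rho>"
proof -
  have "tt D (1\<^sub>m D) (1\<^sub>m D) \<rho> = (\<Sum>a1<D. \<Sum>a2<D. \<Sum>b1<D. if b1 = a1 then (\<Sum>b2<D. if b2 = a2 then \<rho>$$(b1*D+b2, a1*D+a2) else 0) else 0)"
    unfolding tt4 by (intro sum.cong refl) (auto simp: sum_delta_mult2)
  also have "\<dots> = (\<Sum>a1<D. \<Sum>a2<D. \<rho>$$(a1*D+a2, a1*D+a2))"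
    by simp
  also have "\<dots> = mtrace \<rho>" using assms by (simp add: mtrace_def sum_pair)
  finally show ?thesis .
qed

lemma lower_abc:
  assumes u: "unit_vec D \<psi>" and l: "0 \<le> l" "l < 1"
    and r: "\<rho> \<in> carrier_mat (D*D) (D*D)" "density_op (D*D) \<rho>" "perm_invariant D \<rho>"
  shows "\<exists>a b c. 0 \<le> a \<and> 0 \<le> b \<and> 0 \<le> c \<and> a + 2*b + c = 1 \<and>
     p_rho D (Omg D \<psi> l) \<rho> = a + (1+l)*b + l*c \<and> f_rho D \<psi> (Omg D \<psi> l) \<rho> = a + l*b"
proof -
  have d: "\<psi> \<in> carrier_vec D" "dim_vec \<psi> = D" using u unfolding unit_vec_def by auto
  define P where "P = proj \<psi>"
  define I where "I = (1\<^sub>m D :: complex mat)"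
  define Q where "Q = 1\<^sub>m D - proj \<psi>"
  define \<Omega> where "\<Omega> = Omg D \<psi> l"
  have Pe: "P$$(r,s) = \<psi>$r * cnj (\<psi>$s)" if "r<D" "s<D" for r s using that d by (simp add: P_def proj_def)
  have Ie: "I$$(r,s) = (if r = s then 1 else 0)" if "r<D" "s<D" for r s using that by (simp add: I_def)
  have Qe: "Q$$(r,s) = 1 * I$$(r,s) + (-1) * P$$(r,s)" if "r<D" "s<D" for r s
    using that d by (simp add: Q_def I_def P_def proj_def)
  have Oe: "\<Omega>$$(r,s) = complex_of_real (1-l) * P$$(r,s) + complex_of_real l * I$$(r,s)" if "r<D" "s<D" for r s
    using that Pe Ie by (simp add: \<Omega>_def Omg_def)
  have t1: "tt D \<Omega> I \<rho> = complex_of_real (1-l) * tt D P I \<rho> + complex_of_real l * tt D I I \<rho>"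
    by (rule tt_lin1) (rule Oe)
  have t2: "tt D \<Omega> P \<rho> = complex_of_real (1-l) * tt D P P \<rho> + complex_of_real l * tt D I P \<rho>"
    by (rule tt_lin1) (rule Oe)
  have t3: "tt D P Q \<rho> = 1 * tt D P I \<rho> + (-1) * tt D P P \<rho>"
    by (rule tt_lin2) (rule Qe)
  have t4: "tt D Q Q \<rho> = 1 * tt D I Q \<rho> + (-1) * tt D P Q \<rho>"
    by (rule tt_lin1) (rule Qe)
  have t5: "tt D I Q \<rho> = 1 * tt D I I \<rho> + (-1) * tt D I P \<rho>"
    by (rule tt_lin2) (rule Qe)
  have t6: "tt D I P \<rho> = tt D P I \<rho>" using tt_swap r by blast
  have t7: "tt D I I \<rho> = 1" unfolding I_def using tt_one_one[OF r(1)] r(2) unfolding density_op_def by simp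
  have psdr: "psd (D*D) \<rho>" using r(2) unfolding density_op_def by simp
  have gP: "gram D P" unfolding P_def by (rule gram_P[OF u])
  have gQ: "gram D Q" unfolding Q_def by (rule gram_Q[OF u])
  define a where "a = Re (tt D P P \<rho>)"
  define b where "b = Re (tt D P Q \<rho>)"
  define c where "c = Re (tt D Q Q \<rho>)"
  have a0: "0 \<le> a" unfolding a_def by (rule tt_gram_nonneg[OF gP gP psdr])
  have b0: "0 \<le> b" unfolding b_def by (rule tt_gram_nonneg[OF gP gQ psdr])
  have c0: "0 \<le> c" unfolding c_def by (rule tt_gram_nonneg[OF gQ gQ psdr])
  have pr: "p_rho D \<Omega> \<rho> = Re (tt D \<Omega> I \<rho>)"
    unfolding p_rho_def I_def using mtrace_kron[OF _ one_carrier_mat r(1)] \<Omega>_def by simp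
  have fr: "f_rho D \<psi> \<Omega> \<rho> = Re (tt D \<Omega> P \<rho>)"
    unfolding f_rho_def P_def using mtrace_kron[OF _ proj_carrier[OF d(1)] r(1)] \<Omega>_def by simp
  have hY: "Re (tt D P I \<rho>) = a + b" unfolding a_def b_def using t3 by simp
  have hc: "c = 1 - 2*(a+b) + a" unfolding c_def using t4 t5 t6 t7 hY[symmetric] unfolding a_def b_def by simp
  have hp: "Re (tt D \<Omega> I \<rho>) = (1-l) * Re (tt D P I \<rho>) + l" using t1 t7 by simp
  have hf: "Re (tt D \<Omega> P \<rho>) = (1-l) * a + l * Re (tt D P I \<rho>)" unfolding a_def using t2 t6 by simp
  have "a + 2*b + c = 1" using hc by simp
  moreover have "p_rho D \<Omega> \<rho> = a + (1+l)*b + l*c"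
    unfolding pr hp hY hc by (simp add: algebra_simps)
  moreover have "f_rho D \<psi> \<Omega> \<rho> = a + l*b"
    unfolding fr hf hY by (simp add: algebra_simps)
  ultimately show ?thesis using a0 b0 c0 unfolding \<Omega>_def by blast
qed

definition mixm :: "nat \<Rightarrow> nat \<Rightarrow> (nat \<Rightarrow> real) \<Rightarrow> (nat \<Rightarrow> complex vec) \<Rightarrow> (nat \<Rightarrow> complex vec) \<Rightarrow> complex mat" where
  "mixm D K cs xs ys = mat (D*D) (D*D) (\<lambda>(i,j). \<Sum>m<K. complex_of_real (cs m) *
      ((xs m $ (i div D) * ys m $ (i mod D)) * cnj (xs m $ (j div D) * ys m $ (j mod D))))"

lemma mixm_carrier[simp]: "mixm D K cs xs ys \<in> carrier_mat (D*D) (D*D)"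
  unfolding mixm_def by simp

lemma mixm_herm: "hermitian (D*D) (mixm D K cs xs ys)"
  unfolding hermitian_def adj_def by (auto simp: mixm_def mult_ac)

lemma mixm_psd:
  assumes "\<And>m. m < K \<Longrightarrow> 0 \<le> cs m"
  shows "psd (D*D) (mixm D K cs xs ys)"
proof -
  have "0 \<le> Re (cinner v (mixm D K cs xs ys *\<^sub>v v))" if v: "v \<in> carrier_vec (D*D)" for v
  proof -
    define w where "w m = (\<lambda>i. xs m $ (i div D) * ys m $ (i mod D))" for m
    define z where "z m = (\<Sum>i<D*D. v$i * cnj (w m i))" for m
    have "cinner v (mixm D K cs xs ys *\<^sub>v v) = (\<Sum>i<D*D. \<Sum>j<D*D. v$i * cnj(v$j) * mixm D K cs xs ys $$ (j,i))"
      by (rule cinner_quad[OF mixm_carrier v])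
    also have "\<dots> = (\<Sum>i<D*D. \<Sum>j<D*D. \<Sum>m<K. complex_of_real (cs m) * ((v$i * cnj (w m i)) * (cnj (v$j) * w m j)))"
      unfolding w_def by (intro sum.cong refl) (simp add: mixm_def sum_distrib_left mult_ac)
    also have "\<dots> = (\<Sum>i<D*D. \<Sum>m<K. \<Sum>j<D*D. complex_of_real (cs m) * ((v$i * cnj (w m i)) * (cnj (v$j) * w m j)))"
      by (rule sum.cong[OF refl], rule sum.swap)
    also have "\<dots> = (\<Sum>m<K. \<Sum>i<D*D. \<Sum>j<D*D. complex_of_real (cs m) * ((v$i * cnj (w m i)) * (cnj (v$j) * w m j)))"
      by (rule sum.swap)
    also have "\<dots> = (\<Sum>m<K. complex_of_real (cs m) * (z m * cnj (z m)))"
    proof (intro sum.cong refl)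
      fix m
      have "(\<Sum>i<D*D. \<Sum>j<D*D. complex_of_real (cs m) * ((v$i * cnj (w m i)) * (cnj (v$j) * w m j)))
        = complex_of_real (cs m) * ((\<Sum>i<D*D. v$i * cnj (w m i)) * (\<Sum>j<D*D. cnj (v$j) * w m j))"
        unfolding sum_product by (simp only: sum_distrib_left)
      then show "(\<Sum>i<D*D. \<Sum>j<D*D. complex_of_real (cs m) * ((v$i * cnj (w m i)) * (cnj (v$j) * w m j)))
        = complex_of_real (cs m) * (z m * cnj (z m))" unfolding z_def by simp
    qed
    finally have e: "cinner v (mixm D K cs xs ys *\<^sub>v v) = (\<Sum>m<K. complex_of_real (cs m) * (z m * cnj (z m)))" .
    show ?thesis unfolding e
      by (simp add: Re_sum complex_mult_cnj) (intro sum_nonneg mult_nonneg_nonneg, auto simp: assms)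
  qed
  then show ?thesis unfolding psd_def using mixm_herm by blast
qed

lemma cinner_mat: "A \<in> carrier_mat D D \<Longrightarrow> x \<in> carrier_vec D \<Longrightarrow>
  cinner x (A *\<^sub>v x) = (\<Sum>a<D. \<Sum>b<D. cnj (x$a) * A$$(a,b) * x$b)"
  unfolding cinner_def by (auto simp: scalar_prod_def atLeast0LessThan sum_distrib_left mult_ac intro!: sum.cong)

lemma tt_mixm:
  assumes "A \<in> carrier_mat D D" "B \<in> carrier_mat D D"
    "\<And>m. m < K \<Longrightarrow> xs m \<in> carrier_vec D" "\<And>m. m < K \<Longrightarrow> ys m \<in> carrier_vec D"
  shows "tt D A B (mixm D K cs xs ys) = (\<Sum>m<K. complex_of_real (cs m) *
     (cinner (xs m) (A *\<^sub>v xs m) * cinner (ys m) (B *\<^sub>v ys m)))"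
proof -
  define F where "F m a1 b1 = cnj (xs m $ a1) * A$$(a1,b1) * xs m $ b1" for m a1 b1
  define G where "G m a2 b2 = cnj (ys m $ a2) * B$$(a2,b2) * ys m $ b2" for m a2 b2
  have "tt D A B (mixm D K cs xs ys) = (\<Sum>a1<D. \<Sum>a2<D. \<Sum>b1<D. \<Sum>b2<D. \<Sum>m<K.
      complex_of_real (cs m) * (F m a1 b1 * G m a2 b2))"
    unfolding tt4 F_def G_def
  proof (intro sum.cong refl)
    fix a1 a2 b1 b2 assume "a1 \<in> {..<D}" "a2 \<in> {..<D}" "b1 \<in> {..<D}" "b2 \<in> {..<D}"
    then have l: "a1 < D" "a2 < D" "b1 < D" "b2 < D" by auto
    then have l2: "b1*D+b2 < D*D" "a1*D+a2 < D*D"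
      by (metis div_less_iff_less_mult divmod_aux(1) not_less0 zero_less_iff_neq_zero)+
    show "A $$ (a1, b1) * B $$ (a2, b2) * mixm D K cs xs ys $$ (b1 * D + b2, a1 * D + a2) =
         (\<Sum>m<K. complex_of_real (cs m) *
              (cnj (xs m $ a1) * A $$ (a1, b1) * xs m $ b1 * (cnj (ys m $ a2) * B $$ (a2, b2) * ys m $ b2)))"
      using l l2 by (simp add: mixm_def divmod_aux sum_distrib_left mult_ac)
  qed
  also have "\<dots> = (\<Sum>m<K. complex_of_real (cs m) * (\<Sum>a1<D. \<Sum>a2<D. \<Sum>b1<D. \<Sum>b2<D. F m a1 b1 * G m a2 b2))"
    by (simp add: sum_distrib_left sum.swap[of _ "{..<K}"])
  also have "\<dots> = (\<Sum>m<K. complex_of_real (cs m) * ((\<Sum>a1<D. \<Sum>b1<D. F m a1 b1) * (\<Sum>a2<D. \<Sum>b2<D. G m a2 b2)))"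
  proof (intro sum.cong refl arg_cong[where f="\<lambda>x. _ * x"])
    fix m
    have "(\<Sum>a1<D. \<Sum>a2<D. \<Sum>b1<D. \<Sum>b2<D. F m a1 b1 * G m a2 b2) = (\<Sum>a1<D. \<Sum>b1<D. \<Sum>a2<D. \<Sum>b2<D. F m a1 b1 * G m a2 b2)"
      by (rule sum.cong[OF refl], rule sum.swap)
    also have "\<dots> = (\<Sum>a1<D. \<Sum>b1<D. F m a1 b1 * (\<Sum>a2<D. \<Sum>b2<D. G m a2 b2))"
      by (simp add: sum_distrib_left)
    also have "\<dots> = (\<Sum>a1<D. \<Sum>b1<D. F m a1 b1) * (\<Sum>a2<D. \<Sum>b2<D. G m a2 b2)"
      by (simp add: sum_distrib_right)
    finally show "(\<Sum>a1<D. \<Sum>a2<D. \<Sum>b1<D. \<Sum>b2<D. F m a1 b1 * G m a2 b2) = (\<Sum>a1<D. \<Sum>b1<D. F m a1 b1) * (\<Sum>a2<D. \<Sum>b2<D. G m a2 b2)" .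
  qed
  also have "\<dots> = (\<Sum>m<K. complex_of_real (cs m) * (cinner (xs m) (A *\<^sub>v xs m) * cinner (ys m) (B *\<^sub>v ys m)))"
    using assms unfolding F_def G_def by (intro sum.cong refl) (simp add: cinner_mat)
  finally show ?thesis .
qed

lemma mtrace_mixm:
  assumes "\<And>m. m < K \<Longrightarrow> xs m \<in> carrier_vec D" "\<And>m. m < K \<Longrightarrow> ys m \<in> carrier_vec D"
  shows "mtrace (mixm D K cs xs ys) = (\<Sum>m<K. complex_of_real (cs m) * (cinner (xs m) (xs m) * cinner (ys m) (ys m)))"
proof -
  have "mtrace (mixm D K cs xs ys) = tt D (1\<^sub>m D) (1\<^sub>m D) (mixm D K cs xs ys)"
    by (rule tt_one_one[symmetric]) simp
  also have "\<dots> = (\<Sum>m<K. complex_of_real (cs m) * (cinner (xs m) (xs m) * cinner (ys m) (ys m)))"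
    using assms by (subst tt_mixm) auto
  finally show ?thesis .
qed

lemma sum4_expand: "(\<Sum>m::nat<4. f m) = f 0 + f 1 + f 2 + (f 3 :: 'a::comm_monoid_add)"
  by (simp add: eval_nat_numeral add_ac)

definition cs4 :: "real \<Rightarrow> real \<Rightarrow> real \<Rightarrow> nat \<Rightarrow> real" where
  "cs4 a b c m = (if m = 0 then a else if m = 3 then c else b)"
definition xs4 :: "complex vec \<Rightarrow> complex vec \<Rightarrow> nat \<Rightarrow> complex vec" where
  "xs4 p u m = (if m < 2 then p else u)"
definition ys4 :: "complex vec \<Rightarrow> complex vec \<Rightarrow> nat \<Rightarrow> complex vec" where
  "ys4 p u m = (if m = 0 \<or> m = 2 then p else u)"

definition mix4 where "mix4 D p u a b c = mixm D 4 (cs4 a b c) (xs4 p u) (ys4 p u)"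

lemma mix4_perm:
  assumes "dim_vec p = D" "dim_vec u = D"
  shows "perm_invariant D (mix4 D p u a b c)"
proof -
  have "(swap_op D * mix4 D p u a b c * swap_op D) $$ (i,j) = mix4 D p u a b c $$ (i,j)"
    if "i < D*D" "j < D*D" for i j
  proof -
    have s: "sig D i div D = i mod D" "sig D i mod D = i div D" "sig D j div D = j mod D" "sig D j mod D = j div D"
      using that divD_less modD_less divmod_aux unfolding sig_def by metis+
    have "(swap_op D * mix4 D p u a b c * swap_op D) $$ (i,j) = mix4 D p u a b c $$ (sig D i, sig D j)"
      by (rule swap_entries) (use that in \<open>auto simp: mix4_def\<close>)
    then show ?thesis unfolding mix4_def mixm_def
      using that sig_less[OF that(1)] sig_less[OF that(2)]
      by (simp add: s sum4_expand cs4_def xs4_def ys4_def mult_ac add_ac)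
  qed
  then show ?thesis unfolding perm_invariant_def mix4_def
    by (intro eq_matI) (auto simp: mixm_def swap_op_def)
qed

lemma exists_orth:
  assumes "2 \<le> D" "unit_vec D \<psi>"
  shows "\<exists>u. unit_vec D u \<and> cinner \<psi> u = 0"
proof -
  have d: "dim_vec \<psi> = D" and pp: "(\<Sum>k<D. cnj (\<psi>$k) * \<psi>$k) = 1"
    using assms unfolding unit_vec_def cinner_def by auto
  have ss: "(\<Sum>k<D. (cmod (\<psi>$k))^2) = 1"
    using cinner_self[of \<psi>] assms unfolding unit_vec_def d by (metis of_real_eq_1_iff)
  obtain j where j: "j < D" "(cmod (\<psi>$j))^2 < 1"
  proof (rule ccontr)
    assume "\<not> thesis"
    then have "\<forall>k<D. 1 \<le> (cmod (\<psi>$k))^2" using that by force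
    then have "(\<Sum>k<D. (1::real)) \<le> (\<Sum>k<D. (cmod (\<psi>$k))^2)" by (intro sum_mono) auto
    then show False using ss assms(1) by simp
  qed
  define N where "N = 1 - (cmod (\<psi>$j))^2"
  have N: "0 < N" using j unfolding N_def by simp
  define v where "v i = (if i = j then 1 else 0) - cnj (\<psi>$j) * \<psi>$i" for i
  define u where "u = vec D (\<lambda>i. complex_of_real (1 / sqrt N) * v i)"
  have u_dim: "u \<in> carrier_vec D" unfolding u_def by simp
  have "cinner \<psi> u = complex_of_real (1 / sqrt N) * (\<Sum>i<D. cnj (\<psi>$i) * v i)"
    unfolding cinner_def u_def d sum_distrib_left by (intro sum.cong refl) (simp add: mult_ac)
  also have "(\<Sum>i<D. cnj (\<psi>$i) * v i) = (\<Sum>i<D. (if i = j then cnj (\<psi>$i) else 0) - cnj (\<psi>$j) * (cnj (\<psi>$i) * \<psi>$i))"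
    unfolding v_def by (intro sum.cong refl) (auto simp: algebra_simps)
  also have "\<dots> = 0" using j by (simp add: sum_subtractf sum_distrib_left[symmetric] pp)
  finally have o: "cinner \<psi> u = 0" by simp
  have vv: "(\<Sum>i<D. cnj (v i) * v i) = complex_of_real N"
  proof -
    have "(\<Sum>i<D. cnj (v i) * v i) = (\<Sum>i<D. (if i = j then 1 else 0) - (if i = j then cnj (\<psi>$j) * \<psi>$i else 0)
         - (if i = j then \<psi>$j * cnj (\<psi>$i) else 0) + \<psi>$j * cnj (\<psi>$j) * (cnj (\<psi>$i) * \<psi>$i))"
      unfolding v_def by (intro sum.cong refl) (auto simp: algebra_simps)
    also have "\<dots> = (\<Sum>i<D. (if i = j then 1 else 0)) - (\<Sum>i<D. (if i = j then cnj (\<psi>$j) * \<psi>$i else 0))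
         - (\<Sum>i<D. (if i = j then \<psi>$j * cnj (\<psi>$i) else 0)) + (\<Sum>i<D. \<psi>$j * cnj (\<psi>$j) * (cnj (\<psi>$i) * \<psi>$i))"
      by (simp add: sum.distrib sum_subtractf)
    also have "\<dots> = 1 - cnj (\<psi>$j) * \<psi>$j"
      using j by (simp add: sum_distrib_left[symmetric] pp)
    also have "\<dots> = complex_of_real N" unfolding N_def
      by (simp add: mult.commute) (metis complex_norm_square of_real_power)
    finally show ?thesis .
  qed
  have "cinner u u = complex_of_real (1/N) * (\<Sum>i<D. cnj (v i) * v i)"
  proof -
    have "cinner u u = (\<Sum>i<D. complex_of_real (1 / sqrt N) * complex_of_real (1 / sqrt N) * (cnj (v i) * v i))"
      unfolding cinner_def u_def by (intro sum.cong refl) (auto simp: mult_ac)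
    also have "\<dots> = complex_of_real (1/N) * (\<Sum>i<D. cnj (v i) * v i)"
      using N by (simp add: sum_distrib_left[symmetric] of_real_mult[symmetric] real_sqrt_mult[symmetric] sum_divide_distrib[symmetric] del: of_real_mult)
    finally show ?thesis .
  qed
  then have "cinner u u = 1" using vv N by (simp add: of_real_mult[symmetric] del: of_real_mult)
  then show ?thesis using o u_dim unfolding unit_vec_def by blast
qed

lemma sum_delta2:
  fixes g :: "nat \<Rightarrow> complex"
  assumes "i < n" "j < n" "i \<noteq> j"
  shows "(\<Sum>k<n. ((if k = i then 1 else 0) + (if k = j then c else 0)) * g k) = g i + c * g j"
proof -
  have "(\<Sum>k<n. ((if k = i then 1 else 0) + (if k = j then c else 0)) * g k) =
      (\<Sum>k<n. (if k = i then g k else 0) + (if k = j then c * g k else 0))"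
    by (intro sum.cong refl) (use assms(3) in auto)
  also have "\<dots> = g i + c * g j" using assms by (simp add: sum.distrib)
  finally show ?thesis .
qed

lemma psd_diag:
  assumes "psd n A" "i < n"
  shows "0 \<le> Re (A$$(i,i))" "Im (A$$(i,i)) = 0"
proof -
  have A: "A \<in> carrier_mat n n" "adj A = A" using assms unfolding psd_def hermitian_def by auto
  have "cnj (A$$(i,i)) = A$$(i,i)"
    using arg_cong[OF A(2), of "\<lambda>M. M $$ (i,i)"] A(1) assms(2) by (simp add: adj_def)
  then show "Im (A$$(i,i)) = 0" by (metis Reals_cnj_iff complex_is_Real_iff)
  define v where "v = vec n (\<lambda>k. if k = i then 1 else 0 :: complex)"
  have "cinner v (A *\<^sub>v v) = (\<Sum>k<n. \<Sum>l<n. v$k * cnj (v$l) * A$$(l,k))"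
    by (rule cinner_quad[OF A(1)]) (simp add: v_def)
  also have "\<dots> = (\<Sum>k<n. (if k = i then 1 else 0) * (\<Sum>l<n. (if l = i then 1 else 0) * A$$(l,k)))"
    unfolding v_def by (intro sum.cong refl) (auto simp: sum_distrib_left intro!: sum.cong)
  also have "\<dots> = A$$(i,i)" using assms(2) by (simp add: sum_delta_mult)
  finally show "0 \<le> Re (A$$(i,i))" using assms unfolding psd_def v_def by (metis vec_carrier v_def)
qed

lemma psd_entry:
  assumes "psd n A" "i < n" "j < n"
  shows "cmod (A$$(i,j)) \<le> (Re (A$$(i,i)) + Re (A$$(j,j))) / 2"
proof -
  have A: "A \<in> carrier_mat n n" "adj A = A" using assms unfolding psd_def hermitian_def by auto
  have hij: "A$$(j,i) = cnj (A$$(i,j))"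
    using arg_cong[OF A(2), of "\<lambda>M. M $$ (j,i)"] A(1) assms(2,3) by (simp add: adj_def)
  note di = psd_diag[OF assms(1) assms(2)] and dj = psd_diag[OF assms(1) assms(3)]
  define z where "z = A$$(i,j)"
  show ?thesis
  proof (cases "i = j")
    case True
    then show ?thesis using di by (simp add: cmod_def)
  next
    case ij: False
    show ?thesis
    proof (cases "z = 0")
      case True then show ?thesis using di dj unfolding z_def by simp
    next
      case False
      define r where "r = cmod z"
      have r: "0 < r" using False unfolding r_def by simp
      define c where "c = - cnj z / complex_of_real r"
      have zz: "cnj z * z = complex_of_real (r^2)" unfolding r_def
        by (metis complex_norm_square mult.commute)
      have cz: "c * z = - complex_of_real r"
        using r zz unfolding c_def by (simp add: field_simps power2_eq_square)
      have cc: "c * cnj c = 1"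
        using r zz unfolding c_def by (simp add: field_simps power2_eq_square)
      define v where "v = vec n (\<lambda>k. (if k = i then 1 else 0) + (if k = j then c else 0))"
      have "cinner v (A *\<^sub>v v) = (\<Sum>k<n. \<Sum>l<n. v$k * cnj (v$l) * A$$(l,k))"
        by (rule cinner_quad[OF A(1)]) (simp add: v_def)
      also have "\<dots> = (\<Sum>k<n. ((if k = i then 1 else 0) + (if k = j then c else 0)) *
            (\<Sum>l<n. ((if l = i then 1 else 0) + (if l = j then cnj c else 0)) * A$$(l,k)))"
        unfolding v_def sum_distrib_left by (intro sum.cong refl) (auto simp: mult_ac)
      also have "\<dots> = (A$$(i,i) + cnj c * A$$(j,i)) + c * (A$$(i,j) + cnj c * A$$(j,j))"
        using assms(2,3) ij by (simp add: sum_delta2)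
      also have "\<dots> = A$$(i,i) + A$$(j,j) - 2 * complex_of_real r"
      proof -
        have c1: "cnj c * A$$(j,i) = - complex_of_real r"
          unfolding hij z_def[symmetric] by (metis complex_cnj_mult cz complex_cnj_minus complex_cnj_complex_of_real)
        have c2: "c * (cnj c * A$$(j,j)) = A$$(j,j)" using cc by (simp add: mult.assoc[symmetric])
        have c3: "c * A$$(i,j) = - complex_of_real r" using cz unfolding z_def .
        show ?thesis unfolding distrib_left c1 c2 c3 by simp
      qed
      finally have e: "cinner v (A *\<^sub>v v) = A$$(i,i) + A$$(j,j) - 2 * complex_of_real r" .
      have "0 \<le> Re (cinner v (A *\<^sub>v v))" using assms(1) unfolding psd_def v_def by simp
      then show ?thesis unfolding e r_def z_def by simp
    qed
  qed
qed

lemma tt_bound: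
  assumes "\<And>r s. r < D \<Longrightarrow> s < D \<Longrightarrow> cmod (A$$(r,s)) \<le> 1"
    "\<And>r s. r < D \<Longrightarrow> s < D \<Longrightarrow> cmod (B$$(r,s)) \<le> 1"
    "\<And>i j. i < D*D \<Longrightarrow> j < D*D \<Longrightarrow> cmod (\<rho>$$(i,j)) \<le> 1"
  shows "cmod (tt D A B \<rho>) \<le> real ((D*D)*(D*D))"
proof -
  have "cmod (tt D A B \<rho>) \<le> (\<Sum>i<D*D. \<Sum>j<D*D. cmod (A$$(i div D, j div D) * B$$(i mod D, j mod D) * \<rho>$$(j,i)))"
    unfolding tt_def by (rule order_trans[OF norm_sum sum_mono]) (rule norm_sum)
  also have "\<dots> \<le> (\<Sum>i<D*D. \<Sum>j<D*D. (1::real))"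
  proof (intro sum_mono)
    fix i j assume "i \<in> {..<D*D}" "j \<in> {..<D*D}"
    then have l: "i < D*D" "j < D*D" by auto
    show "cmod (A$$(i div D, j div D) * B$$(i mod D, j mod D) * \<rho>$$(j,i)) \<le> 1"
      unfolding norm_mult
      using assms(1)[OF divD_less[OF l(1)] divD_less[OF l(2)]] assms(2)[OF modD_less[OF l(1)] modD_less[OF l(2)]] assms(3)[OF l(2) l(1)]
      by (simp add: mult_le_one)
  qed
  also have "\<dots> = real ((D*D)*(D*D))" by simp
  finally show ?thesis .
qed

lemma f_lower:
  assumes "unit_vec D \<psi>" "verification_operator D \<psi> \<Omega>" "\<rho> \<in> carrier_mat (D*D) (D*D)" "density_op (D*D) \<rho>"
  shows "- real ((D*D)*(D*D)) \<le> f_rho D \<psi> \<Omega> \<rho>"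
proof -
  have d: "\<psi> \<in> carrier_vec D" "dim_vec \<psi> = D" using assms unfolding unit_vec_def by auto
  have pO: "psd D \<Omega>" "psd D (1\<^sub>m D - \<Omega>)" and Oc: "\<Omega> \<in> carrier_mat D D"
    using assms(2) unfolding verification_operator_def hermitian_def by auto
  have pr: "psd (D*D) \<rho>" "mtrace \<rho> = 1" using assms(4) unfolding density_op_def by auto
  have Od: "Re (\<Omega>$$(r,r)) \<le> 1" if "r < D" for r
    using psd_diag(1)[OF pO(2) that] that Oc by simp
  have Ob: "cmod (\<Omega>$$(r,s)) \<le> 1" if "r < D" "s < D" for r s
    using psd_entry[OF pO(1) that] Od[OF that(1)] Od[OF that(2)] by simp
  have psi1: "cmod (\<psi>$r) \<le> 1" if "r < D" for r
  proof -
    have "(\<Sum>k<D. (cmod (\<psi>$k))^2) = 1"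
      using cinner_self[of \<psi>] assms(1) unfolding unit_vec_def d by (metis of_real_eq_1_iff)
    moreover have "(cmod (\<psi>$r))^2 \<le> (\<Sum>k<D. (cmod (\<psi>$k))^2)"
      using that by (intro member_le_sum) auto
    ultimately have "(cmod (\<psi>$r))^2 \<le> 1^2" by simp
    then show ?thesis by (rule power2_le_imp_le) simp
  qed
  have Pb: "cmod (proj \<psi> $$ (r,s)) \<le> 1" if "r < D" "s < D" for r s
    using that d psi1 by (simp add: proj_def norm_mult mult_le_one)
  have rd: "Re (\<rho>$$(i,i)) \<le> 1" if "i < D*D" for i
  proof -
    have "(\<Sum>k<D*D. Re (\<rho>$$(k,k))) = 1" using pr(2) assms(3) unfolding mtrace_def by (simp add: Re_sum[symmetric])
    moreover have "Re (\<rho>$$(i,i)) \<le> (\<Sum>k<D*D. Re (\<rho>$$(k,k)))"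
      using that psd_diag(1)[OF pr(1)] by (intro member_le_sum) auto
    ultimately show ?thesis by simp
  qed
  have rb: "cmod (\<rho>$$(i,j)) \<le> 1" if "i < D*D" "j < D*D" for i j
    using psd_entry[OF pr(1) that] rd[OF that(1)] rd[OF that(2)] by simp
  have "cmod (tt D \<Omega> (proj \<psi>) \<rho>) \<le> real ((D*D)*(D*D))"
    by (rule tt_bound) (use Ob Pb rb in auto)
  moreover have "f_rho D \<psi> \<Omega> \<rho> = Re (tt D \<Omega> (proj \<psi>) \<rho>)"
    unfolding f_rho_def using mtrace_kron[OF Oc proj_carrier[OF d(1)] assms(3)] by simp
  ultimately show ?thesis using abs_Re_le_cmod[of "tt D \<Omega> (proj \<psi>) \<rho>"] by linarith
qed

lemma R_upper:
  fixes \<mu> \<delta> \<epsilon> :: real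
  assumes "0 \<le> \<mu>" "\<mu> \<le> 1" "0 < \<delta>" "\<delta> < 1" "0 < \<epsilon>" "\<epsilon> < 1"
    and gt: "\<delta> * (1 - \<epsilon>) > max (2 - 2 * sqrt (1 - \<delta>) - \<delta>) (2 * \<delta> - 1)"
  shows "\<exists>a b c. 0 \<le> a \<and> 0 \<le> b \<and> 0 \<le> c \<and> a + 2*b + c = 1 \<and> \<delta> \<le> a + (1+\<mu>)*b + \<mu>*c \<and>
     (a + \<mu>*b) / (a + (1+\<mu>)*b + \<mu>*c) < 1 - \<epsilon>"
proof -
  define s where "s = sqrt (1 - \<delta>)"
  have s: "0 \<le> s" "s^2 = 1 - \<delta>" using assms unfolding s_def by auto
  have M1: "2 - 2 * sqrt (1 - \<delta>) - \<delta> = (1 - s)^2" using s unfolding s_def[symmetric] by (simp add: power2_eq_square algebra_simps)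
  show ?thesis
  proof (cases "\<delta> \<le> \<mu>")
    case True
    show ?thesis
      by (rule exI[of _ 0], rule exI[of _ 0], rule exI[of _ 1]) (use True assms in auto)
  next
    case lt: False
    define t where "t = (1 - \<delta>) / (1 - \<mu>)"
    have mu1: "0 < 1 - \<mu>" using lt assms by simp
    have tt: "t * (1 - \<mu>) = 1 - \<delta>" unfolding t_def using mu1 by simp
    have t1: "t < 1" unfolding t_def using lt mu1 by (simp add: divide_less_eq)
    have t0: "0 < t" unfolding t_def using assms mu1 by simp
    show ?thesis
    proof (cases "2 * \<delta> - 1 \<le> \<mu>")
      case True
      have "1 * (1 - \<mu>) \<le> (2 * t) * (1 - \<mu>)" using tt True by (simp add: algebra_simps)
      then have th: "1 \<le> 2 * t" using mult_le_cancel_right_pos[OF mu1] by blast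
      have p: "0 + (1+\<mu>)*(1-t) + \<mu>*(2*t-1) = \<delta>" using tt by (simp add: algebra_simps)
      have key: "\<mu> * (1 - t) * (1 - \<mu>) \<le> (1 - s)^2 * (1 - \<mu>)"
      proof -
        have e0: "(1 - t) * (1 - \<mu>) = 1 - \<mu> - s^2" using tt s(2) by (simp add: algebra_simps)
        have "\<mu> * (1 - t) * (1 - \<mu>) = \<mu> * (1 - \<mu> - s^2)" by (simp only: mult.assoc e0)
        moreover have "(1 - s)^2 * (1 - \<mu>) - \<mu> * (1 - \<mu> - s^2) = (\<mu> - (1 - s))^2"
          by (simp add: power2_eq_square algebra_simps)
        ultimately show ?thesis using zero_le_power2[of "\<mu> - (1 - s)"] by linarith
      qed
      then have f: "\<mu> * (1 - t) \<le> (1 - s)^2" using mu1 by simp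
      have "(0 + \<mu>*(1-t)) / \<delta> < 1 - \<epsilon>"
        using f gt M1 assms by (simp add: divide_less_eq mult.commute)
      then show ?thesis
        by (intro exI[of _ 0] exI[of _ "1-t"] exI[of _ "2*t-1"]) (use p th t1 assms in auto)
    next
      case False
      have "(2 * t) * (1 - \<mu>) < 1 * (1 - \<mu>)" using tt False by (simp add: algebra_simps)
      then have th: "2 * t < 1" using mult_less_cancel_right_pos[OF mu1] by blast
      have p: "(1 - 2*t) + (1+\<mu>)*t + \<mu>*0 = \<delta>" using tt by (simp add: algebra_simps)
      have f: "1 - 2*t + \<mu>*t \<le> 2 * \<delta> - 1"
      proof -
        have "0 \<le> t * \<mu>" using t0 assms by simp
        then have "2 * (1 - \<delta>) \<le> t * (2 - \<mu>)" using tt by (simp add: algebra_simps)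
        then show ?thesis by (simp add: algebra_simps)
      qed
      have "(1 - 2*t + \<mu>*t) / \<delta> < 1 - \<epsilon>"
        using f gt assms by (simp add: divide_less_eq mult.commute)
      then show ?thesis
        by (intro exI[of _ "1-2*t"] exI[of _ "t"] exI[of _ 0]) (use p th t0 assms in auto)
    qed
  qed
qed

lemma R_lower:
  fixes \<delta> \<epsilon> :: real
  assumes "0 < \<delta>" "\<delta> < 1" "0 < \<epsilon>" "\<epsilon> < 1"
    and le: "\<delta> * (1 - \<epsilon>) \<le> max (2 - 2 * sqrt (1 - \<delta>) - \<delta>) (2 * \<delta> - 1)"
  shows "\<exists>l. 0 \<le> l \<and> l < 1 \<and> (\<forall>a b c. 0 \<le> a \<longrightarrow> 0 \<le> b \<longrightarrow> 0 \<le> c \<longrightarrow> a + 2*b + c = 1 \<longrightarrow>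
     \<delta> \<le> a + (1+l)*b + l*c \<longrightarrow> 1 - \<epsilon> \<le> (a + l*b) / (a + (1+l)*b + l*c))"
proof -
  define s where "s = sqrt (1 - \<delta>)"
  have s: "0 < s" "s < 1" "s^2 = 1 - \<delta>" using assms unfolding s_def by auto
  have M1: "2 - 2 * sqrt (1 - \<delta>) - \<delta> = (1 - s)^2" using s unfolding s_def[symmetric] by (simp add: power2_eq_square algebra_simps)
  define M where "M = max ((1 - s)^2) (2 * \<delta> - 1)"
  have le': "\<delta> * (1 - \<epsilon>) \<le> M" using le M1 unfolding M_def by simp
  have fin: "1 - \<epsilon> \<le> f / p" if "\<delta> * f \<ge> M * p" "\<delta> \<le> p" for f p
  proof -
    have "\<delta> * (1 - \<epsilon>) * p \<le> M * p" using le' that assms by (intro mult_right_mono) auto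
    then have "\<delta> * ((1 - \<epsilon>) * p) \<le> \<delta> * f" using that by (simp add: mult_ac)
    then have "(1 - \<epsilon>) * p \<le> f" using assms by simp
    then show ?thesis using that assms by (simp add: le_divide_eq)
  qed
  show ?thesis
  proof (cases "2 * \<delta> - 1 \<le> (1 - s)^2")
    case True
    have M: "M = (1 - s)^2" using True unfolding M_def by simp
    show ?thesis
    proof (rule exI[of _ "1 - s"], intro conjI allI impI)
      fix a b c :: real assume h: "0 \<le> a" "0 \<le> b" "0 \<le> c" "a + 2*b + c = 1" "\<delta> \<le> a + (1+(1-s))*b + (1-s)*c"
      have c: "c = 1 - a - 2*b" using h by simp
      have d: "\<delta> = 1 - s^2" using s by simp
      have ab: "1 - s \<le> a + b"
      proof -
        have "s * (1 - s) \<le> s * (a + b)" using h(5) unfolding c d by (simp add: power2_eq_square algebra_simps)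
        then show ?thesis using s by simp
      qed
      have "\<delta> * (a + (1-s)*b) - M * (a + (1+(1-s))*b + (1-s)*c) = (1-s) * ((1+s^2)*a + (1-s)*b - (1-s)^2)"
        unfolding M c d by (simp add: power2_eq_square algebra_simps)
      moreover have "0 \<le> (1+s^2)*a + (1-s)*b - (1-s)^2"
      proof -
        have "(1-s)*(1-s) \<le> (1-s)*(a+b)" using ab s by (intro mult_left_mono) auto
        moreover have "(1-s)*a \<le> (1+s^2)*a"
        proof -
          have "1 - s \<le> 1 + s^2" using s by (smt (verit) zero_le_power2)
          then show ?thesis using h by (intro mult_right_mono) auto
        qed
        ultimately show ?thesis by (simp add: power2_eq_square algebra_simps)
      qed
      ultimately have "M * (a + (1+(1-s))*b + (1-s)*c) \<le> \<delta> * (a + (1-s)*b)" using s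
        by (smt (verit) mult_nonneg_nonneg)
      then show "1 - \<epsilon> \<le> (a + (1-s)*b) / (a + (1+(1-s))*b + (1-s)*c)" using fin h(5) by blast
    qed (use s in auto)
  next
    case False
    have M: "M = 2 * \<delta> - 1" using False unfolding M_def by simp
    show ?thesis
    proof (rule exI[of _ 0], intro conjI allI impI)
      fix a b c :: real assume h: "0 \<le> a" "0 \<le> b" "0 \<le> c" "a + 2*b + c = 1" "\<delta> \<le> a + (1+0)*b + 0*c"
      have "\<delta> * a - M * (a + b) = (a + b - \<delta>) + \<delta> * c"
      proof -
        have cc: "c = 1 - a - 2*b" using h(4) by simp
        show ?thesis unfolding M by (simp add: cc algebra_simps)
      qed
      moreover have "0 \<le> \<delta> * c" using h assms by simp
      ultimately have "M * (a + (1+0)*b + 0*c) \<le> \<delta> * (a + 0*b)" using h by simp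
      then show "1 - \<epsilon> \<le> (a + 0*b) / (a + (1+0)*b + 0*c)" using fin h(5) by blast
    qed auto
  qed
qed

lemma R_equiv:
  fixes \<delta> \<epsilon> :: real
  assumes "0 < \<delta>" "\<delta> < 1" "0 < \<epsilon>" "\<epsilon> < 1"
  shows "(\<delta> * (1 - \<epsilon>) \<le> max (2 - 2 * sqrt (1 - \<delta>) - \<delta>) (2 * \<delta> - 1))
     \<longleftrightarrow> \<delta> \<ge> min (4 * (1 - \<epsilon>) / (2 - \<epsilon>)^2) (1 / (1 + \<epsilon>))"
proof -
  define s where "s = sqrt (1 - \<delta>)"
  have s: "0 < s" "s < 1" "s^2 = 1 - \<delta>" using assms unfolding s_def by auto
  have M1: "2 - 2 * sqrt (1 - \<delta>) - \<delta> = (1 - s)^2" using s unfolding s_def[symmetric] by (simp add: power2_eq_square algebra_simps)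
  have e1: "(2 * \<delta> - 1 \<ge> \<delta> * (1 - \<epsilon>)) \<longleftrightarrow> \<delta> \<ge> 1 / (1 + \<epsilon>)"
    using assms by (simp add: divide_le_eq algebra_simps)
  have e2: "((1 - s)^2 \<ge> \<delta> * (1 - \<epsilon>)) \<longleftrightarrow> \<delta> \<ge> 4 * (1 - \<epsilon>) / (2 - \<epsilon>)^2"
  proof -
    have dd: "\<delta> * (1 - \<epsilon>) = (1 - s) * ((1 + s) * (1 - \<epsilon>))"
    proof -
      have dd: "\<delta> = 1 - s*s" using s(3) by (simp add: power2_eq_square)
      show ?thesis by (simp add: dd algebra_simps)
    qed
    have "((1 - s)^2 \<ge> \<delta> * (1 - \<epsilon>)) \<longleftrightarrow> (1 - s) * (1 - s) \<ge> (1 - s) * ((1 + s) * (1 - \<epsilon>))"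
      unfolding dd by (simp add: power2_eq_square)
    also have "\<dots> \<longleftrightarrow> 1 - s \<ge> (1 + s) * (1 - \<epsilon>)" using s by simp
    also have "\<dots> \<longleftrightarrow> s * (2 - \<epsilon>) \<le> \<epsilon>" by (simp add: algebra_simps)
    also have "\<dots> \<longleftrightarrow> s \<le> \<epsilon> / (2 - \<epsilon>)" using assms by (simp add: le_divide_eq)
    also have "\<dots> \<longleftrightarrow> s^2 \<le> (\<epsilon> / (2 - \<epsilon>))^2"
    proof -
      have "0 \<le> \<epsilon> / (2 - \<epsilon>)" using assms by simp
      then show ?thesis using s(1) power_mono_iff[of s "\<epsilon> / (2 - \<epsilon>)" 2] by linarith
    qed
    also have "\<dots> \<longleftrightarrow> 1 - \<delta> \<le> \<epsilon>^2 / (2 - \<epsilon>)^2" using s by (simp add: power_divide)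
    also have "\<dots> \<longleftrightarrow> \<delta> \<ge> 4 * (1 - \<epsilon>) / (2 - \<epsilon>)^2"
    proof -
      have "(2 - \<epsilon>)^2 > 0" using assms by simp
      then have "4 * (1 - \<epsilon>) / (2 - \<epsilon>)^2 = 1 - \<epsilon>^2 / (2 - \<epsilon>)^2"
        by (simp add: field_simps power2_eq_square)
      then show ?thesis by linarith
    qed
    finally show ?thesis .
  qed
  show ?thesis unfolding M1 le_max_iff_disj min_le_iff_disj using e1 e2 by blast
qed

lemma R_min:
  fixes \<epsilon> :: real
  assumes "0 < \<epsilon>" "\<epsilon> < 1"
  shows "min (4 * (1 - \<epsilon>) / (2 - \<epsilon>)^2) (1 / (1 + \<epsilon>))
           = (if \<epsilon> \<le> 4/5 then 1 / (1 + \<epsilon>) else 4 * (1 - \<epsilon>) / (2 - \<epsilon>)^2)"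
proof -
  have p: "(2 - \<epsilon>)^2 > 0" "1 + \<epsilon> > 0" using assms by auto
  have "(1 / (1 + \<epsilon>) \<le> 4 * (1 - \<epsilon>) / (2 - \<epsilon>)^2) \<longleftrightarrow> (2 - \<epsilon>)^2 \<le> 4 * (1 - \<epsilon>) * (1 + \<epsilon>)"
    using p by (simp add: divide_le_eq le_divide_eq mult_ac)
  also have "\<dots> \<longleftrightarrow> \<epsilon> \<le> 4/5" using assms
    by (simp add: power2_eq_square algebra_simps)
  finally show ?thesis by (auto simp: min_def)
qed

lemma proj_dims[simp]: "dim_row (proj \<psi>) = dim_vec \<psi>" "dim_col (proj \<psi>) = dim_vec \<psi>"
  by (simp_all add: proj_def)

lemma cinner_proj: "x \<in> carrier_vec D \<Longrightarrow> y \<in> carrier_vec D \<Longrightarrow> \<psi> \<in> carrier_vec D \<Longrightarrow>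
  cinner y (proj \<psi> *\<^sub>v x) = cinner y \<psi> * cinner \<psi> x"
proof -
  assume a: "x \<in> carrier_vec D" "y \<in> carrier_vec D" "\<psi> \<in> carrier_vec D"
  have "cinner y (proj \<psi> *\<^sub>v x) = (\<Sum>i<D. \<Sum>j<D. cnj (y$i) * proj \<psi> $$ (i,j) * x$j)"
    using a proj_carrier[OF a(3)] unfolding cinner_def
    by (auto simp: scalar_prod_def atLeast0LessThan sum_distrib_left mult_ac intro!: sum.cong)
  also have "\<dots> = (\<Sum>i<D. \<Sum>j<D. (cnj (y$i) * \<psi>$i) * (cnj (\<psi>$j) * x$j))"
    using a by (intro sum.cong refl) (auto simp: proj_def mult_ac)
  also have "\<dots> = cinner y \<psi> * cinner \<psi> x"
    using a by (simp add: cinner_def sum_product)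
  finally show ?thesis .
qed

lemma mix4_facts:
  assumes u: "unit_vec D u" and p: "unit_vec D \<psi>" and o: "cinner \<psi> u = 0"
    and abc: "0 \<le> a" "0 \<le> b" "0 \<le> c" "a + 2*b + c = 1"
    and O: "\<Omega> \<in> carrier_mat D D"
  shows "mix4 D \<psi> u a b c \<in> carrier_mat (D*D) (D*D)" "density_op (D*D) (mix4 D \<psi> u a b c)"
    "perm_invariant D (mix4 D \<psi> u a b c)"
    "p_rho D \<Omega> (mix4 D \<psi> u a b c) = Re (complex_of_real (a + b) * cinner \<psi> (\<Omega> *\<^sub>v \<psi>) + complex_of_real (b + c) * cinner u (\<Omega> *\<^sub>v u))"
    "f_rho D \<psi> \<Omega> (mix4 D \<psi> u a b c) = Re (complex_of_real a * cinner \<psi> (\<Omega> *\<^sub>v \<psi>) + complex_of_real b * cinner u (\<Omega> *\<^sub>v u))"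
proof -
  have d: "\<psi> \<in> carrier_vec D" "u \<in> carrier_vec D" "dim_vec \<psi> = D" "dim_vec u = D"
    and pp: "cinner \<psi> \<psi> = 1" and uu: "cinner u u = 1"
    using u p unfolding unit_vec_def by auto
  have up: "cinner u \<psi> = 0" using o cinner_swap[of u \<psi>] d by simp
  have xs: "xs4 \<psi> u m \<in> carrier_vec D" "ys4 \<psi> u m \<in> carrier_vec D" for m
    using d unfolding xs4_def ys4_def by auto
  have pP: "cinner \<psi> (proj \<psi> *\<^sub>v \<psi>) = 1" using cinner_proj[OF d(1) d(1) d(1)] pp by simp
  have uP: "cinner u (proj \<psi> *\<^sub>v u) = 0" using cinner_proj[OF d(2) d(2) d(1)] up by simp
  show "mix4 D \<psi> u a b c \<in> carrier_mat (D*D) (D*D)" unfolding mix4_def by simp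
  have "psd (D*D) (mix4 D \<psi> u a b c)" unfolding mix4_def
    by (rule mixm_psd) (use abc in \<open>auto simp: cs4_def\<close>)
  moreover have "mtrace (mix4 D \<psi> u a b c) = 1"
    unfolding mix4_def using xs abc
    by (subst mtrace_mixm) (auto simp: sum4_expand cs4_def xs4_def ys4_def pp uu simp flip: of_real_add)
  ultimately show "density_op (D*D) (mix4 D \<psi> u a b c)" unfolding density_op_def by simp
  show "perm_invariant D (mix4 D \<psi> u a b c)" by (rule mix4_perm) (use d in auto)
  have "p_rho D \<Omega> (mix4 D \<psi> u a b c) = Re (tt D \<Omega> (1\<^sub>m D) (mix4 D \<psi> u a b c))"
    unfolding p_rho_def by (subst mtrace_kron[OF O one_carrier_mat]) (auto simp: mix4_def)
  also have "\<dots> = Re (complex_of_real (a + b) * cinner \<psi> (\<Omega> *\<^sub>v \<psi>) + complex_of_real (b + c) * cinner u (\<Omega> *\<^sub>v u))"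
    unfolding mix4_def using xs
    by (subst tt_mixm[OF O one_carrier_mat]) (auto simp: sum4_expand cs4_def xs4_def ys4_def pp uu d algebra_simps)
  finally show "p_rho D \<Omega> (mix4 D \<psi> u a b c) = Re (complex_of_real (a + b) * cinner \<psi> (\<Omega> *\<^sub>v \<psi>) + complex_of_real (b + c) * cinner u (\<Omega> *\<^sub>v u))" .
  have "f_rho D \<psi> \<Omega> (mix4 D \<psi> u a b c) = Re (tt D \<Omega> (proj \<psi>) (mix4 D \<psi> u a b c))"
    unfolding f_rho_def by (subst mtrace_kron[OF O proj_carrier[OF d(1)]]) (auto simp: mix4_def)
  also have "\<dots> = Re (complex_of_real a * cinner \<psi> (\<Omega> *\<^sub>v \<psi>) + complex_of_real b * cinner u (\<Omega> *\<^sub>v u))"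
    unfolding mix4_def using xs
    by (subst tt_mixm[OF O proj_carrier[OF d(1)]]) (auto simp: sum4_expand cs4_def xs4_def ys4_def pP uP algebra_simps)
  finally show "f_rho D \<psi> \<Omega> (mix4 D \<psi> u a b c) = Re (complex_of_real a * cinner \<psi> (\<Omega> *\<^sub>v \<psi>) + complex_of_real b * cinner u (\<Omega> *\<^sub>v u))" .
qed

theorem corollary5:
  fixes D :: nat and \<psi> :: "complex vec" and \<epsilon> \<delta> :: real
  assumes "D \<ge> 2" and "unit_vec D \<psi>"
    and "0 < \<epsilon>" "\<epsilon> < 1" and "0 < \<delta>" "\<delta> < 1"
  shows "((\<exists>\<Omega>. verification_operator D \<psi> \<Omega> \<and> F1 D \<psi> \<delta> \<Omega> \<ge> 1 - \<epsilon>)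
            \<longleftrightarrow> \<delta> * (1 - \<epsilon>) \<le> max (2 - 2 * sqrt (1 - \<delta>) - \<delta>) (2 * \<delta> - 1))
       \<and> ((\<exists>\<Omega>. verification_operator D \<psi> \<Omega> \<and> F1 D \<psi> \<delta> \<Omega> \<ge> 1 - \<epsilon>)
            \<longleftrightarrow> \<delta> \<ge> min (4 * (1 - \<epsilon>) / (2 - \<epsilon>)^2) (1 / (1 + \<epsilon>)))
       \<and> min (4 * (1 - \<epsilon>) / (2 - \<epsilon>)^2) (1 / (1 + \<epsilon>))
           = (if \<epsilon> \<le> 4/5 then 1 / (1 + \<epsilon>) else 4 * (1 - \<epsilon>) / (2 - \<epsilon>)^2)"
proof -
  note pu = assms(2)
  define S where "S \<Omega> = {f_rho D \<psi> \<Omega> \<rho> / p_rho D \<Omega> \<rho> | \<rho>.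
      \<rho> \<in> carrier_mat (D * D) (D * D) \<and> density_op (D * D) \<rho> \<and> perm_invariant D \<rho> \<and>
      p_rho D \<Omega> \<rho> \<ge> \<delta>}" for \<Omega>
  have F1S: "F1 D \<psi> \<delta> \<Omega> = Inf (S \<Omega>)" for \<Omega> unfolding F1_def S_def ..
  obtain u where u: "unit_vec D u" "cinner \<psi> u = 0" using exists_orth[OF assms(1,2)] by blast
  have d: "\<psi> \<in> carrier_vec D" "u \<in> carrier_vec D" and pp: "cinner \<psi> \<psi> = 1" and uu: "cinner u u = 1"
    using u pu unfolding unit_vec_def by auto
  note mf = mix4_facts[OF u(1) pu u(2)]
  have main: "(\<exists>\<Omega>. verification_operator D \<psi> \<Omega> \<and> F1 D \<psi> \<delta> \<Omega> \<ge> 1 - \<epsilon>)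
            \<longleftrightarrow> \<delta> * (1 - \<epsilon>) \<le> max (2 - 2 * sqrt (1 - \<delta>) - \<delta>) (2 * \<delta> - 1)"
  proof
    assume "\<exists>\<Omega>. verification_operator D \<psi> \<Omega> \<and> F1 D \<psi> \<delta> \<Omega> \<ge> 1 - \<epsilon>"
    then obtain \<Omega> where vo: "verification_operator D \<psi> \<Omega>" and F: "F1 D \<psi> \<delta> \<Omega> \<ge> 1 - \<epsilon>" by blast
    have Oc: "\<Omega> \<in> carrier_mat D D" and pO: "psd D \<Omega>" "psd D (1\<^sub>m D - \<Omega>)" and Opsi: "\<Omega> *\<^sub>v \<psi> = \<psi>"
      using vo unfolding verification_operator_def hermitian_def by auto
    show "\<delta> * (1 - \<epsilon>) \<le> max (2 - 2 * sqrt (1 - \<delta>) - \<delta>) (2 * \<delta> - 1)"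
    proof (rule ccontr)
      assume gt: "\<not> ?thesis"
      define \<mu> where "\<mu> = Re (cinner u (\<Omega> *\<^sub>v u))"
      have mu0: "0 \<le> \<mu>" using pO(1) d(2) unfolding psd_def \<mu>_def by blast
      have mu1: "\<mu> \<le> 1"
      proof -
        have "(1\<^sub>m D - \<Omega>) *\<^sub>v u = u - \<Omega> *\<^sub>v u"
          using d by (simp add: minus_mult_distrib_mat_vec[OF one_carrier_mat Oc d(2)])
        then have "cinner u ((1\<^sub>m D - \<Omega>) *\<^sub>v u) = cinner u u - cinner u (\<Omega> *\<^sub>v u)"
          using cinner_minus[OF d(2) mult_mat_vec_carrier[OF Oc d(2)]] by simp
        moreover have "0 \<le> Re (cinner u ((1\<^sub>m D - \<Omega>) *\<^sub>v u))" using pO(2) d(2) unfolding psd_def by blast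
        ultimately show ?thesis using uu unfolding \<mu>_def by simp
      qed
      obtain a b c where abc: "0 \<le> a" "0 \<le> b" "0 \<le> c" "a + 2*b + c = 1"
        and pd: "\<delta> \<le> a + (1+\<mu>)*b + \<mu>*c" and lt: "(a + \<mu>*b) / (a + (1+\<mu>)*b + \<mu>*c) < 1 - \<epsilon>"
        using R_upper[OF mu0 mu1 assms(5,6,3,4)] gt by force
      define \<rho> where "\<rho> = mix4 D \<psi> u a b c"
      have Opp: "cinner \<psi> (\<Omega> *\<^sub>v \<psi>) = 1" using Opsi pp by simp
      have prho: "p_rho D \<Omega> \<rho> = a + (1+\<mu>)*b + \<mu>*c"
        unfolding \<rho>_def mf(4)[OF abc Oc] Opp \<mu>_def by (simp add: algebra_simps)
      have frho: "f_rho D \<psi> \<Omega> \<rho> = a + \<mu>*b"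
        unfolding \<rho>_def mf(5)[OF abc Oc] Opp \<mu>_def by (simp add: algebra_simps)
      have inS: "(a + \<mu>*b) / (a + (1+\<mu>)*b + \<mu>*c) \<in> S \<Omega>"
        unfolding S_def using mf(1-3)[OF abc Oc] pd prho frho unfolding \<rho>_def by (smt (verit) mem_Collect_eq)
      define K where "K = real ((D*D)*(D*D))"
      have bdd: "bdd_below (S \<Omega>)"
      proof (rule bdd_belowI)
        fix x assume "x \<in> S \<Omega>"
        then obtain r where r: "r \<in> carrier_mat (D * D) (D * D)" "density_op (D * D) r" "p_rho D \<Omega> r \<ge> \<delta>"
          and x: "x = f_rho D \<psi> \<Omega> r / p_rho D \<Omega> r" unfolding S_def by blast
        have f: "- K \<le> f_rho D \<psi> \<Omega> r" unfolding K_def by (rule f_lower[OF pu vo r(1,2)])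
        have pp0: "0 < p_rho D \<Omega> r" using r(3) assms(5) by simp
        have K0: "0 \<le> K" unfolding K_def by simp
        have "- K / \<delta> \<le> - K / p_rho D \<Omega> r"
          using K0 r(3) assms(5) by (simp add: divide_left_mono)
        also have "\<dots> \<le> x" unfolding x using divide_right_mono[OF f, of "p_rho D \<Omega> r"] pp0 by simp
        finally show "- K / \<delta> \<le> x" .
      qed
      have "Inf (S \<Omega>) \<le> (a + \<mu>*b) / (a + (1+\<mu>)*b + \<mu>*c)" by (rule cInf_lower[OF inS bdd])
      then show False using F lt unfolding F1S by simp
    qed
  next
    assume le: "\<delta> * (1 - \<epsilon>) \<le> max (2 - 2 * sqrt (1 - \<delta>) - \<delta>) (2 * \<delta> - 1)"
    obtain l where l: "0 \<le> l" "l < 1" and lb: "\<And>a b c. 0 \<le> a \<Longrightarrow> 0 \<le> b \<Longrightarrow> 0 \<le> c \<Longrightarrow> a + 2*b + c = 1 \<Longrightarrow>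
       \<delta> \<le> a + (1+l)*b + l*c \<Longrightarrow> 1 - \<epsilon> \<le> (a + l*b) / (a + (1+l)*b + l*c)"
      using R_lower[OF assms(5,6,3,4) le] by blast
    define \<Omega> where "\<Omega> = Omg D \<psi> l"
    have vo: "verification_operator D \<psi> \<Omega>" unfolding \<Omega>_def by (rule Omg_verif[OF pu l])
    have Oc: "\<Omega> \<in> carrier_mat D D" and Opsi: "\<Omega> *\<^sub>v \<psi> = \<psi>"
      using vo unfolding verification_operator_def hermitian_def by auto
    have Opp: "cinner \<psi> (\<Omega> *\<^sub>v \<psi>) = 1" using Opsi pp by simp
    have ne: "S \<Omega> \<noteq> {}"
    proof -
      have abc: "(0::real) \<le> 1" "(0::real) \<le> 0" "(0::real) \<le> 0" "1 + 2*0 + 0 = (1::real)" by auto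
      have "p_rho D \<Omega> (mix4 D \<psi> u 1 0 0) = 1" unfolding mf(4)[OF abc Oc] Opp by simp
      then have "f_rho D \<psi> \<Omega> (mix4 D \<psi> u 1 0 0) / p_rho D \<Omega> (mix4 D \<psi> u 1 0 0) \<in> S \<Omega>"
        unfolding S_def using mf(1-3)[OF abc Oc] assms(6)
        by (intro CollectI exI[of _ "mix4 D \<psi> u 1 0 0"]) simp
      then show ?thesis by blast
    qed
    have "1 - \<epsilon> \<le> Inf (S \<Omega>)"
    proof (rule cInf_greatest[OF ne])
      fix x assume "x \<in> S \<Omega>"
      then obtain r where r: "r \<in> carrier_mat (D * D) (D * D)" "density_op (D * D) r" "perm_invariant D r"
          "p_rho D \<Omega> r \<ge> \<delta>" and x: "x = f_rho D \<psi> \<Omega> r / p_rho D \<Omega> r" unfolding S_def by blast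
      obtain a b c where abc: "0 \<le> a" "0 \<le> b" "0 \<le> c" "a + 2*b + c = 1"
        and pe: "p_rho D \<Omega> r = a + (1+l)*b + l*c" and fe: "f_rho D \<psi> \<Omega> r = a + l*b"
        using lower_abc[OF pu l r(1-3)] unfolding \<Omega>_def by blast
      show "1 - \<epsilon> \<le> x" unfolding x pe fe by (rule lb[OF abc]) (use r(4) pe in simp)
    qed
    then show "\<exists>\<Omega>. verification_operator D \<psi> \<Omega> \<and> F1 D \<psi> \<delta> \<Omega> \<ge> 1 - \<epsilon>"
      using vo unfolding F1S by blast
  qed
  show ?thesis using main R_equiv[OF assms(5,6,3,4)] R_min[OF assms(3,4)] by simp
qed

end
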